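(* For $g\ge 1$ let $\phi_g$ be the number of maximum matchings of $\mathcal{F}_g\setminus\{v_1,v_2\}$, let $\varphi_g$ be the number of maximum matchings of $\mathcal{F}_g\setminus\{v_1\}$, and let $\theta_g$ be the number of maximum matchings of $\mathcal{F}_g$. Then $\phi_1=1$, $\varphi_1=2$, $\theta_1=2$, and for all $g\ge 1$, $$\phi_{g+1}=4\phi_g^2\varphi_g^2,\qquad \varphi_{g+1}=4\phi_g^2\varphi_g\theta_g+4\phi_g\varphi_g^3,\qquad \theta_{g+1}=2\phi_g^2\theta_g^2+2\varphi_g^4+12\phi_g\varphi_g^2\theta_g .$$
   Context: The graphs $\mathcal{F}_g$ with four distinguished "hub" vertices $v_1,v_2,v_3,v_4$ are defined recursively. $\mathcal{F}_1$ is the 4-cycle with edges $\{v_1,v_3\},\{v_3,v_2\},\{v_2,v_4\},\{v_4,v_1\}$ (so $v_1,v_2$ are diagonal, and $v_3,v_4$ are diagonal). For $g>1$, take four disjoint copies $\mathcal{F}_{g-1}^{(i)}$, $i=1,2,3,4$, of $\mathcal{F}_{g-1}$, with hubs $v_k^{(i)}$ corresponding to $v_k$; then identify $v_1^{(1)}$ with $v_1^{(4)}$ to form the hub $v_1$ of $\mathcal{F}_g$, identify $v_2^{(2)}$ with $v_1^{(3)}$ to form $v_2$, identify $v_2^{(1)}$ with $v_1^{(2)}$ to form $v_3$, and identify $v_2^{(3)}$ with $v_2^{(4)}$ to form $v_4$. (Equivalently, $\mathcal{F}_g$ arises from $\mathcal{F}_{g-1}$ by replacing each edge $\{u,v\}$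 by two new vertices each adjacent to both $u$ and $v$, deleting the edge $\{u,v\}$.) For a graph $G$ and vertex set $S$, $G\setminus S$ denotes the subgraph induced on the vertices not in $S$. A maximum matching is a matching of maximum cardinality. *)

theory Defs
  imports Main
begin

(* Vertices: the hubs are Hub 1, Hub 2, Hub 3, Hub 4; New u v b (b = False/True) are the two
   vertices created when the (oriented) edge (u,v) is subdivided. *)
datatype vtx = Hub nat | New vtx vtx bool

(* One orientation of each edge of F_g (g >= 1). F_1 is the 4-cycle v1-v3-v2-v4-v1;
   F_{g+1} replaces every edge {u,v} of F_g by two new vertices adjacent to both u and v. *)
primrec F_arcs :: "nat \<Rightarrow> (vtx \<times> vtx) set" where
  "F_arcs 0 = {}"
| "F_arcs (Suc g) =
     (if g = 0 then {(Hub 1, Hub 3), (Hub 3, Hub 2), (Hub 2, Hub 4), (Hub 4, Hub 1)}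
      else (\<Union>(u, v)\<in>F_arcs g. \<Union>b\<in>{False, True}. {(u, New u v b), (New u v b, v)}))"

definition F_edges :: "nat \<Rightarrow> vtx set set" where
  "F_edges g = {{u, v} | u v. (u, v) \<in> F_arcs g}"

definition del_vertices :: "'a set set \<Rightarrow> 'a set \<Rightarrow> 'a set set" where
  "del_vertices E S = {e \<in> E. e \<inter> S = {}}"

definition matching :: "'a set set \<Rightarrow> 'a set set \<Rightarrow> bool" where
  "matching E M \<longleftrightarrow> M \<subseteq> E \<and> (\<forall>e\<in>M. \<forall>e'\<in>M. e \<noteq> e' \<longrightarrow> e \<inter> e' = {})"

definition max_matching :: "'a set set \<Rightarrow> 'a set set \<Rightarrow> bool" where
  "max_matching E M \<longleftrightarrow> matching E M \<and> (\<forall>M'. matching E M' \<longrightarrow> card M' \<le> card M)"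

definition num_max_matchings :: "'a set set \<Rightarrow> nat" where
  "num_max_matchings E = card {M. max_matching E M}"

definition phi :: "nat \<Rightarrow> nat" where
  "phi g = num_max_matchings (del_vertices (F_edges g) {Hub 1, Hub 2})"

definition varphi :: "nat \<Rightarrow> nat" where
  "varphi g = num_max_matchings (del_vertices (F_edges g) {Hub 1})"

definition theta :: "nat \<Rightarrow> nat" where
  "theta g = num_max_matchings (F_edges g)"

end

theory Submission
  imports Defs
begin


definition Good :: "'a set set \<Rightarrow> 'a set \<Rightarrow> nat \<Rightarrow> ('a set \<Rightarrow> nat) \<Rightarrow> bool" where
"Good E T t N \<longleftrightarrow> finite E \<and> finite T \<and> (\<forall>e\<in>E. card e = 2) \<and>
   (\<forall>S\<subseteq>T. (\<forall>M. matching (del_vertices E S) M \<longrightarrow> card M + card S \<le> t) \<and>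
      card {M. matching (del_vertices E S) M \<and> card M + card S = t} = N S \<and> 0 < N S)"

lemma matching_finite: "matching E M \<Longrightarrow> finite E \<Longrightarrow> finite M"
  unfolding matching_def using finite_subset by blast

lemma glue:
  assumes G1: "Good E1 T1 t1 N1" and G2: "Good E2 T2 t2 N2"
    and V1: "\<Union>E1 \<subseteq> V1" "T1 \<subseteq> V1" and V2: "\<Union>E2 \<subseteq> V2" "T2 \<subseteq> V2"
    and H: "V1 \<inter> V2 = H" "H \<subseteq> T1" "H \<subseteq> T2" and disj: "E1 \<inter> E2 = {}"
  shows "Good (E1 \<union> E2) (T1 \<union> T2) (t1 + t2 - card H)
     (\<lambda>S. \<Sum>A\<in>Pow (H - S). N1 (S \<inter> T1 \<union> (H - S - A)) * N2 (S \<inter> T2 \<union> A))"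
proof -
  have fin: "finite E1" "finite T1" "finite E2" "finite T2" "\<forall>e\<in>E1. card e = 2" "\<forall>e\<in>E2. card e = 2"
    using G1 G2 unfolding Good_def by auto
  have finH: "finite H" using H(2) fin finite_subset by blast
  have T12: "T1 \<inter> T2 = H" using V1 V2 H by blast
  have b1: "\<And>X M. X \<subseteq> T1 \<Longrightarrow> matching (del_vertices E1 X) M \<Longrightarrow> card M + card X \<le> t1"
    using G1 unfolding Good_def by blast
  have b2: "\<And>X M. X \<subseteq> T2 \<Longrightarrow> matching (del_vertices E2 X) M \<Longrightarrow> card M + card X \<le> t2"
    using G2 unfolding Good_def by blast
  define MM1 where "MM1 X = {M. matching (del_vertices E1 X) M \<and> card M + card X = t1}" for X
  define MM2 where "MM2 X = {M. matching (del_vertices E2 X) M \<and> card M + card X = t2}" for X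
  have c1: "\<And>X. X \<subseteq> T1 \<Longrightarrow> card (MM1 X) = N1 X \<and> 0 < N1 X"
    using G1 unfolding Good_def MM1_def by blast
  have c2: "\<And>X. X \<subseteq> T2 \<Longrightarrow> card (MM2 X) = N2 X \<and> 0 < N2 X"
    using G2 unfolding Good_def MM2_def by blast
  have finMM1: "finite (MM1 X)" for X
    by (rule finite_subset[of _ "Pow E1"]) (auto simp: MM1_def matching_def del_vertices_def fin)
  have finMM2: "finite (MM2 X)" for X
    by (rule finite_subset[of _ "Pow E2"]) (auto simp: MM2_def matching_def del_vertices_def fin)
  have main: "(\<forall>M. matching (del_vertices (E1 \<union> E2) S) M \<longrightarrow> card M + card S + card H \<le> t1 + t2) \<and>
      card {M. matching (del_vertices (E1 \<union> E2) S) M \<and> card M + card S + card H = t1 + t2} =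
      (\<Sum>A\<in>Pow (H - S). N1 (S \<inter> T1 \<union> (H - S - A)) * N2 (S \<inter> T2 \<union> A)) \<and>
      0 < (\<Sum>A\<in>Pow (H - S). N1 (S \<inter> T1 \<union> (H - S - A)) * N2 (S \<inter> T2 \<union> A))"
    if S: "S \<subseteq> T1 \<union> T2" for S
  proof -
    define S1 where "S1 A = S \<inter> T1 \<union> (H - S - A)" for A
    define S2 where "S2 A = S \<inter> T2 \<union> A" for A
    have finS: "finite S" using S fin finite_subset by blast
    have S1T: "S1 A \<subseteq> T1" for A using H unfolding S1_def by blast
    have S2T: "A \<subseteq> H - S \<Longrightarrow> S2 A \<subseteq> T2" for A using H unfolding S2_def by blast
    have cardS: "card (S1 A) + card (S2 A) = card S + card H" if A: "A \<subseteq> H - S" for A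
    proof -
      have u: "S1 A \<union> S2 A = S \<union> H" using A S H unfolding S1_def S2_def by blast
      have i: "S1 A \<inter> S2 A = S \<inter> H" using A S H T12 unfolding S1_def S2_def by blast
      have f1: "finite (S1 A)" "finite (S2 A)" using finS finH A unfolding S1_def S2_def by (auto intro: finite_subset[OF _ finH])
      have "card (S1 A) + card (S2 A) = card (S1 A \<union> S2 A) + card (S1 A \<inter> S2 A)"
        using card_Un_Int[OF f1] by simp
      also have "\<dots> = card (S \<union> H) + card (S \<inter> H)" using u i by simp
      also have "\<dots> = card S + card H" using card_Un_Int[OF finS finH] by simp
      finally show ?thesis .
    qed
    have dec: "matching (del_vertices E1 (S1 ((H - S) \<inter> \<Union>(M \<inter> E1)))) (M \<inter> E1) \<and>
               matching (del_vertices E2 (S2 ((H - S) \<inter> \<Union>(M \<inter> E1)))) (M \<inter> E2) \<and>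
               card M = card (M \<inter> E1) + card (M \<inter> E2)"
      if M: "matching (del_vertices (E1 \<union> E2) S) M" for M
    proof -
      define A where "A = (H - S) \<inter> \<Union>(M \<inter> E1)"
      have MD: "M \<subseteq> del_vertices (E1 \<union> E2) S" using M unfolding matching_def by blast
      have pw: "\<forall>e\<in>M. \<forall>e'\<in>M. e \<noteq> e' \<longrightarrow> e \<inter> e' = {}" using M unfolding matching_def by blast
      have eS: "e \<inter> S = {}" if "e \<in> M" for e using MD that unfolding del_vertices_def by blast
      have "M \<inter> E1 \<subseteq> del_vertices E1 (S1 A)"
      proof
        fix e assume e: "e \<in> M \<inter> E1"
        have "e \<inter> (H - S - A) = {}" using e unfolding A_def by blast
        then show "e \<in> del_vertices E1 (S1 A)" using e eS[of e] unfolding del_vertices_def S1_def by blast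
      qed
      then have m1: "matching (del_vertices E1 (S1 A)) (M \<inter> E1)"
        using pw unfolding matching_def by blast
      have "M \<inter> E2 \<subseteq> del_vertices E2 (S2 A)"
      proof
        fix e assume e: "e \<in> M \<inter> E2"
        have "e \<inter> A = {}"
        proof (rule ccontr)
          assume "e \<inter> A \<noteq> {}"
          then obtain v e' where v: "v \<in> e" "v \<in> e'" "e' \<in> M \<inter> E1" unfolding A_def by blast
          have "e \<noteq> e'" using e v disj by blast
          then show False using pw e v by blast
        qed
        then show "e \<in> del_vertices E2 (S2 A)" using e eS[of e] unfolding del_vertices_def S2_def by blast
      qed
      then have m2: "matching (del_vertices E2 (S2 A)) (M \<inter> E2)"
        using pw unfolding matching_def by blast
      have sM: "M \<subseteq> E1 \<union> E2" using M unfolding matching_def del_vertices_def by blast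
      have finM: "finite M" using sM fin by (auto intro: finite_subset[OF sM])
      have eq: "M = (M \<inter> E1) \<union> (M \<inter> E2)" using sM by blast
      have "card ((M \<inter> E1) \<union> (M \<inter> E2)) = card (M \<inter> E1) + card (M \<inter> E2)"
        by (rule card_Un_disjoint) (use finM disj in auto)
      then have "card M = card (M \<inter> E1) + card (M \<inter> E2)" using eq by simp
      with m1 m2 show ?thesis unfolding A_def by blast
    qed
    have bound: "card M + card S + card H \<le> t1 + t2" if M: "matching (del_vertices (E1 \<union> E2) S) M" for M
    proof -
      define A where "A = (H - S) \<inter> \<Union>(M \<inter> E1)"
      have A: "A \<subseteq> H - S" unfolding A_def by blast
      from dec[OF M] have d: "matching (del_vertices E1 (S1 A)) (M \<inter> E1)"
        "matching (del_vertices E2 (S2 A)) (M \<inter> E2)" "card M = card (M \<inter> E1) + card (M \<inter> E2)"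
        unfolding A_def by auto
      have "card (M \<inter> E1) + card (S1 A) \<le> t1" using b1[OF S1T d(1)] .
      moreover have "card (M \<inter> E2) + card (S2 A) \<le> t2" using b2[OF S2T[OF A] d(2)] .
      ultimately show ?thesis using d(3) cardS[OF A] by linarith
    qed
    have cover: "(H - S) \<inter> \<Union>M1 = A" if A: "A \<subseteq> H - S" and M1: "M1 \<in> MM1 (S1 A)" for A M1
    proof
      have M1e: "\<forall>e\<in>M1. e \<inter> S1 A = {}" using M1 unfolding MM1_def matching_def del_vertices_def by auto
      then show "(H - S) \<inter> \<Union>M1 \<subseteq> A" unfolding S1_def by blast
      show "A \<subseteq> (H - S) \<inter> \<Union>M1"
      proof
        fix h assume h: "h \<in> A"
        show "h \<in> (H - S) \<inter> \<Union>M1"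
        proof (rule ccontr)
          assume "h \<notin> (H - S) \<inter> \<Union>M1"
          then have nh: "h \<notin> \<Union>M1" using h A by blast
          have mm: "M1 \<subseteq> del_vertices E1 (S1 A)" "\<forall>e\<in>M1. \<forall>e'\<in>M1. e \<noteq> e' \<longrightarrow> e \<inter> e' = {}"
            using M1 unfolding MM1_def matching_def by auto
          have "matching (del_vertices E1 (insert h (S1 A))) M1"
            unfolding matching_def using mm nh by (auto simp: del_vertices_def)
          moreover have "insert h (S1 A) \<subseteq> T1" using S1T h A H by blast
          ultimately have "card M1 + card (insert h (S1 A)) \<le> t1" using b1 by blast
          moreover have "h \<notin> S1 A" using h A unfolding S1_def by blast
          moreover have "finite (S1 A)" using S1T fin finite_subset by blast
          ultimately show False using M1 unfolding MM1_def by simp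
        qed
      qed
    qed
    define MM where "MM = {M. matching (del_vertices (E1 \<union> E2) S) M \<and> card M + card S + card H = t1 + t2}"
    define D where "D = (SIGMA A:Pow (H - S). MM1 (S1 A) \<times> MM2 (S2 A))"
    define f where "f = (\<lambda>(A::'a set, M1::'a set set, M2::'a set set). M1 \<union> M2)"
    have img: "f ` D = MM"
    proof
      show "f ` D \<subseteq> MM"
      proof
        fix M assume "M \<in> f ` D"
        then obtain A M1 M2 where A: "A \<subseteq> H - S" and M1: "M1 \<in> MM1 (S1 A)" and M2: "M2 \<in> MM2 (S2 A)"
          and M: "M = M1 \<union> M2" unfolding D_def f_def by auto
        have sub1: "M1 \<subseteq> E1" "\<forall>e\<in>M1. e \<inter> S1 A = {}" using M1 unfolding MM1_def matching_def del_vertices_def by auto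
        have sub2: "M2 \<subseteq> E2" "\<forall>e\<in>M2. e \<inter> S2 A = {}" using M2 unfolding MM2_def matching_def del_vertices_def by auto
        have e1V: "\<forall>e\<in>M1. e \<subseteq> V1" using sub1(1) V1(1) by blast
        have e2V: "\<forall>e\<in>M2. e \<subseteq> V2" using sub2(1) V2(1) by blast
        have avoidS: "\<forall>e\<in>M. e \<inter> S = {}"
        proof
          fix e assume "e \<in> M"
          then consider "e \<in> M1" | "e \<in> M2" using M by blast
          then show "e \<inter> S = {}"
          proof cases
            case 1
            have "S \<inter> V1 \<subseteq> S1 A" using S V2(2) H(1,2) unfolding S1_def by blast
            have "e \<subseteq> V1" "e \<inter> S1 A = {}" using 1 sub1(2) e1V by auto
            then show ?thesis using \<open>S \<inter> V1 \<subseteq> S1 A\<close> by blast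
          next
            case 2
            have "S \<inter> V2 \<subseteq> S2 A" using S V1(2) H(1,3) unfolding S2_def by blast
            have "e \<subseteq> V2" "e \<inter> S2 A = {}" using 2 sub2(2) e2V by auto
            then show ?thesis using \<open>S \<inter> V2 \<subseteq> S2 A\<close> by blast
          qed
        qed
        have cross: "e1 \<inter> e2 = {}" if "e1 \<in> M1" "e2 \<in> M2" for e1 e2
        proof -
          have "e1 \<inter> e2 \<subseteq> H" using that e1V e2V H(1) by blast
          moreover have "H \<subseteq> S1 A \<union> S2 A" using A H(2,3) unfolding S1_def S2_def by blast
          moreover have "e1 \<inter> S1 A = {}" "e2 \<inter> S2 A = {}" using that sub1(2) sub2(2) by auto
          ultimately show ?thesis by blast
        qed
        have mat: "matching (del_vertices (E1 \<union> E2) S) M"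
          unfolding matching_def
        proof
          show "M \<subseteq> del_vertices (E1 \<union> E2) S" using avoidS sub1(1) sub2(1) M unfolding del_vertices_def by blast
          have p1: "\<forall>e\<in>M1. \<forall>e'\<in>M1. e \<noteq> e' \<longrightarrow> e \<inter> e' = {}" using M1 unfolding MM1_def matching_def by auto
          have p2: "\<forall>e\<in>M2. \<forall>e'\<in>M2. e \<noteq> e' \<longrightarrow> e \<inter> e' = {}" using M2 unfolding MM2_def matching_def by auto
          show "\<forall>e\<in>M. \<forall>e'\<in>M. e \<noteq> e' \<longrightarrow> e \<inter> e' = {}"
          proof (intro ballI impI)
            fix e e' assume ee: "e \<in> M" "e' \<in> M" "e \<noteq> e'"
            show "e \<inter> e' = {}"
            proof (cases "e \<in> M1")
              case True
              then show ?thesis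
              proof (cases "e' \<in> M1")
                case True
                then show ?thesis using p1 \<open>e \<in> M1\<close> ee(3) by blast
              next
                case False
                then have "e' \<in> M2" using ee M by blast
                then show ?thesis using cross[OF \<open>e \<in> M1\<close>] by blast
              qed
            next
              case False
              then have e2: "e \<in> M2" using ee M by blast
              show ?thesis
              proof (cases "e' \<in> M1")
                case True
                then show ?thesis using cross[OF True e2] by blast
              next
                case False
                then have "e' \<in> M2" using ee M by blast
                then show ?thesis using p2 e2 ee(3) by blast
              qed
            qed
          qed
        qed
        have dj: "M1 \<inter> M2 = {}" using sub1(1) sub2(1) disj by blast
        have fM1: "finite M1" using finite_subset[OF sub1(1) fin(1)] .
        have fM2: "finite M2" using finite_subset[OF sub2(1) fin(3)] .
        have "card M = card M1 + card M2" unfolding M using card_Un_disjoint[OF fM1 fM2 dj] .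
        then have "card M + card S + card H = t1 + t2"
          using M1 M2 cardS[OF A] unfolding MM1_def MM2_def by simp
        then show "M \<in> MM" using mat unfolding MM_def by blast
      qed
      show "MM \<subseteq> f ` D"
      proof
        fix M assume M: "M \<in> MM"
        define A where "A = (H - S) \<inter> \<Union>(M \<inter> E1)"
        have A: "A \<subseteq> H - S" unfolding A_def by blast
        have Mm: "matching (del_vertices (E1 \<union> E2) S) M" using M unfolding MM_def by blast
        from dec[OF Mm] have d: "matching (del_vertices E1 (S1 A)) (M \<inter> E1)"
          "matching (del_vertices E2 (S2 A)) (M \<inter> E2)" "card M = card (M \<inter> E1) + card (M \<inter> E2)"
          unfolding A_def by auto
        have l1: "card (M \<inter> E1) + card (S1 A) \<le> t1" using b1[OF S1T d(1)] .
        moreover have l2: "card (M \<inter> E2) + card (S2 A) \<le> t2" using b2[OF S2T[OF A] d(2)] .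
        moreover have "card M + card S + card H = t1 + t2" using M unfolding MM_def by blast
        ultimately have "card (M \<inter> E1) + card (S1 A) = t1" "card (M \<inter> E2) + card (S2 A) = t2"
          using d(3) cardS[OF A] by linarith+
        then have inD: "(A, M \<inter> E1, M \<inter> E2) \<in> D" using d A unfolding D_def MM1_def MM2_def by simp
        have "M = (M \<inter> E1) \<union> (M \<inter> E2)" using Mm unfolding matching_def del_vertices_def by blast
        then have "M = f (A, M \<inter> E1, M \<inter> E2)" unfolding f_def by simp
        then show "M \<in> f ` D" using inD by (rule image_eqI)
      qed
    qed
    have inj: "inj_on f D"
    proof (rule inj_onI)
      fix x y assume x: "x \<in> D" and y: "y \<in> D" and fxy: "f x = f y"
      obtain A M1 M2 where xe: "x = (A, M1, M2)" by (cases x) auto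
      obtain B P1 P2 where ye: "y = (B, P1, P2)" by (cases y) auto
      have xA: "A \<subseteq> H - S" "M1 \<in> MM1 (S1 A)" "M2 \<in> MM2 (S2 A)" using x xe D_def by auto
      have yB: "B \<subseteq> H - S" "P1 \<in> MM1 (S1 B)" "P2 \<in> MM2 (S2 B)" using y ye D_def by auto
      have s: "M1 \<subseteq> E1" "M2 \<subseteq> E2" "P1 \<subseteq> E1" "P2 \<subseteq> E2"
        using xA yB unfolding MM1_def MM2_def matching_def del_vertices_def by auto
      have u: "M1 \<union> M2 = P1 \<union> P2" using fxy xe ye f_def by simp
      have "M1 = (M1 \<union> M2) \<inter> E1" "P1 = (P1 \<union> P2) \<inter> E1" using s disj by blast+
      then have e1: "M1 = P1" using u by simp
      have "M2 = (M1 \<union> M2) \<inter> E2" "P2 = (P1 \<union> P2) \<inter> E2" using s disj by blast+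
      then have e2: "M2 = P2" using u by simp
      have "A = B" using cover[OF xA(1,2)] cover[OF yB(1,2)] e1 by simp
      then show "x = y" using xe ye e1 e2 by simp
    qed
    have finD: "finite (Pow (H - S))" using finH by simp
    have "card MM = card D" using card_image[OF inj] img by simp
    also have "\<dots> = (\<Sum>A\<in>Pow (H - S). card (MM1 (S1 A)) * card (MM2 (S2 A)))"
      unfolding D_def using finD finMM1 finMM2 by (simp add: card_cartesian_product)
    also have "\<dots> = (\<Sum>A\<in>Pow (H - S). N1 (S1 A) * N2 (S2 A))"
      using c1[OF S1T] c2[OF S2T] by (intro sum.cong) auto
    finally have cnt: "card MM = (\<Sum>A\<in>Pow (H - S). N1 (S1 A) * N2 (S2 A))" .
    have pos: "0 < (\<Sum>A\<in>Pow (H - S). N1 (S1 A) * N2 (S2 A))"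
    proof -
      have "0 < N1 (S1 {}) * N2 (S2 {})" using c1[OF S1T] c2[OF S2T[of "{}"]] by simp
      moreover have "{} \<in> Pow (H - S)" by simp
      ultimately show ?thesis using finD
        by (intro sum_pos2[where i="{}"]) auto
    qed
    have b': "\<forall>M. matching (del_vertices (E1 \<union> E2) S) M \<longrightarrow> card M + card S + card H \<le> t1 + t2"
      using bound by blast
    show ?thesis using b' cnt pos unfolding MM_def S1_def S2_def by (simp only: simp_thms)
  qed
  have key: "(\<forall>M. matching (del_vertices (E1 \<union> E2) S) M \<longrightarrow> card M + card S \<le> t1 + t2 - card H) \<and>
     card {M. matching (del_vertices (E1 \<union> E2) S) M \<and> card M + card S = t1 + t2 - card H} =
       (\<Sum>A\<in>Pow (H - S). N1 (S \<inter> T1 \<union> (H - S - A)) * N2 (S \<inter> T2 \<union> A)) \<and>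
     0 < (\<Sum>A\<in>Pow (H - S). N1 (S \<inter> T1 \<union> (H - S - A)) * N2 (S \<inter> T2 \<union> A))"
    if S: "S \<subseteq> T1 \<union> T2" for S
  proof -
    have m0: "matching (del_vertices (E1 \<union> E2) S) {}" by (simp add: matching_def)
    have bb: "\<forall>M. matching (del_vertices (E1 \<union> E2) S) M \<longrightarrow> card M + card S + card H \<le> t1 + t2"
      using main[OF S] by (rule conjunct1)
    have cc: "card {M. matching (del_vertices (E1 \<union> E2) S) M \<and> card M + card S + card H = t1 + t2} =
      (\<Sum>A\<in>Pow (H - S). N1 (S \<inter> T1 \<union> (H - S - A)) * N2 (S \<inter> T2 \<union> A))"
      using main[OF S] by (rule conjunct1[OF conjunct2])
    have pp: "0 < (\<Sum>A\<in>Pow (H - S). N1 (S \<inter> T1 \<union> (H - S - A)) * N2 (S \<inter> T2 \<union> A))"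
      using main[OF S] by (rule conjunct2[OF conjunct2])
    have le: "card S + card H \<le> t1 + t2" using bb[rule_format, OF m0] by simp
    have r1: "\<forall>M. matching (del_vertices (E1 \<union> E2) S) M \<longrightarrow> card M + card S \<le> t1 + t2 - card H"
      using bb by auto
    have "{M. matching (del_vertices (E1 \<union> E2) S) M \<and> card M + card S = t1 + t2 - card H}
        = {M. matching (del_vertices (E1 \<union> E2) S) M \<and> card M + card S + card H = t1 + t2}"
      using le by auto
    then have r2: "card {M. matching (del_vertices (E1 \<union> E2) S) M \<and> card M + card S = t1 + t2 - card H} =
       (\<Sum>A\<in>Pow (H - S). N1 (S \<inter> T1 \<union> (H - S - A)) * N2 (S \<inter> T2 \<union> A))"
      using cc by simp
    show ?thesis using r1 r2 pp by blast
  qed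
  have "finite (E1 \<union> E2)" "finite (T1 \<union> T2)" "\<forall>e\<in>E1 \<union> E2. card e = 2" using fin by auto
  then show ?thesis unfolding Good_def using key by blast
qed



definition tri :: "nat \<Rightarrow> nat \<Rightarrow> nat \<Rightarrow> nat \<Rightarrow> nat" where
  "tri p q r n = (if n = 0 then r else if n = 1 then q else p)"

lemma Good_restrict:
  assumes "Good E T t N" "T' \<subseteq> T" "\<And>S. S \<subseteq> T' \<Longrightarrow> N S = N' S"
  shows "Good E T' t N'"
proof -
  have "finite T'" using assms(1,2) unfolding Good_def using finite_subset by blast
  moreover have "\<forall>S\<subseteq>T'. S \<subseteq> T" using assms(2) by blast
  ultimately show ?thesis using assms(1,3) unfolding Good_def by (metis (no_types, lifting))
qed

lemma edge_disj:
  assumes "\<forall>e\<in>E1. card e = 2" "\<Union>E1 \<subseteq> V1" "\<Union>E2 \<subseteq> V2" "V1 \<inter> V2 \<subseteq> {h}"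
  shows "E1 \<inter> E2 = {}"
proof (rule ccontr)
  assume "E1 \<inter> E2 \<noteq> {}"
  then obtain e where e: "e \<in> E1" "e \<in> E2" by blast
  then have "e \<subseteq> {h}" using assms(2-4) by blast
  then have "card e \<le> 1" using card_mono[of "{h}" e] by simp
  then show False using assms(1) e by simp
qed

lemma sum_Pow0: "(\<Sum>A\<in>Pow {}. f A) = f {}" by simp

lemma sum_Pow1: "(\<Sum>A\<in>Pow {a}. f A) = f {} + f {a}"
  by (simp add: Pow_insert add.commute)

lemma sum_Pow2: "a \<noteq> b \<Longrightarrow> (\<Sum>A\<in>Pow {a, b}. f A) = f {} + f {a} + f {b} + f {a, b}"
proof -
  assume ab: "a \<noteq> b"
  have "Pow {a, b} = {{}, {a}, {b}, {a, b}}" by (auto simp: Pow_insert)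
  moreover have "{} \<notin> {{a}, {b}, {a, b}}" "{a} \<notin> {{b}, {a, b}}" "{b} \<notin> {{a, b}}" using ab by auto
  ultimately show ?thesis by (simp add: insert_commute add.assoc)
qed

lemma cycle:
  assumes d: "distinct [h1, h2, h3, h4]"
    and G1: "Good E1 {h1, h2} t (\<lambda>S. tri p q r (card S))"
    and G2: "Good E2 {h2, h3} t (\<lambda>S. tri p q r (card S))"
    and G3: "Good E3 {h3, h4} t (\<lambda>S. tri p q r (card S))"
    and G4: "Good E4 {h4, h1} t (\<lambda>S. tri p q r (card S))"
    and V: "\<Union>E1 \<subseteq> V1" "{h1, h2} \<subseteq> V1" "\<Union>E2 \<subseteq> V2" "{h2, h3} \<subseteq> V2"
           "\<Union>E3 \<subseteq> V3" "{h3, h4} \<subseteq> V3" "\<Union>E4 \<subseteq> V4" "{h4, h1} \<subseteq> V4"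
    and I: "V1 \<inter> V2 = {h2}" "V2 \<inter> V3 = {h3}" "V3 \<inter> V4 = {h4}" "V4 \<inter> V1 = {h1}"
           "V1 \<inter> V3 = {}" "V2 \<inter> V4 = {}"
  shows "Good (E1 \<union> E2 \<union> E3 \<union> E4) {h1, h3} (4 * t - 4)
     (\<lambda>S. tri (4 * p^2 * q^2) (4 * p^2 * q * r + 4 * p * q^3)
              (2 * p^2 * r^2 + 2 * q^4 + 12 * p * q^2 * r) (card S))"
proof -
  have c2: "\<forall>e\<in>E1. card e = 2" "\<forall>e\<in>E2. card e = 2" "\<forall>e\<in>E3. card e = 2" "\<forall>e\<in>E4. card e = 2"
    using G1 G2 G3 G4 unfolding Good_def by auto
  have d12: "E1 \<inter> E2 = {}" by (rule edge_disj[OF c2(1) V(1) V(3)]) (use I in auto)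
  have d34: "E3 \<inter> E4 = {}" by (rule edge_disj[OF c2(3) V(5) V(7)]) (use I in auto)
  have d13: "E1 \<inter> E3 = {}" by (rule edge_disj[OF c2(1) V(1) V(5), of h1]) (use I in auto)
  have d14: "E1 \<inter> E4 = {}" by (rule edge_disj[OF c2(1) V(1) V(7), of h1]) (use I in auto)
  have d23: "E2 \<inter> E3 = {}" by (rule edge_disj[OF c2(2) V(3) V(5), of h3]) (use I in auto)
  have d24: "E2 \<inter> E4 = {}" by (rule edge_disj[OF c2(2) V(3) V(7), of h3]) (use I in auto)
  have G12: "Good (E1 \<union> E2) ({h1, h2} \<union> {h2, h3}) (t + t - card {h2})
     (\<lambda>S. \<Sum>A\<in>Pow ({h2} - S). tri p q r (card (S \<inter> {h1, h2} \<union> ({h2} - S - A))) * tri p q r (card (S \<inter> {h2, h3} \<union> A)))"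
    by (rule glue[OF G1 G2 V(1,2,3,4)]) (use I d12 in auto)
  have G34: "Good (E3 \<union> E4) ({h3, h4} \<union> {h4, h1}) (t + t - card {h4})
     (\<lambda>S. \<Sum>A\<in>Pow ({h4} - S). tri p q r (card (S \<inter> {h3, h4} \<union> ({h4} - S - A))) * tri p q r (card (S \<inter> {h4, h1} \<union> A)))"
    by (rule glue[OF G3 G4 V(5,6,7,8)]) (use I d34 in auto)
  have G: "Good ((E1 \<union> E2) \<union> (E3 \<union> E4)) (({h1, h2} \<union> {h2, h3}) \<union> ({h3, h4} \<union> {h4, h1})) 
      ((t + t - card {h2}) + (t + t - card {h4}) - card {h1, h3})
     (\<lambda>S. \<Sum>A\<in>Pow ({h1, h3} - S).
        (\<lambda>S. \<Sum>A\<in>Pow ({h2} - S). tri p q r (card (S \<inter> {h1, h2} \<union> ({h2} - S - A))) * tri p q r (card (S \<inter> {h2, h3} \<union> A)))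
          (S \<inter> ({h1, h2} \<union> {h2, h3}) \<union> ({h1, h3} - S - A)) *
        (\<lambda>S. \<Sum>A\<in>Pow ({h4} - S). tri p q r (card (S \<inter> {h3, h4} \<union> ({h4} - S - A))) * tri p q r (card (S \<inter> {h4, h1} \<union> A)))
          (S \<inter> ({h3, h4} \<union> {h4, h1}) \<union> A))"
    by (rule glue[OF G12 G34, of "V1 \<union> V2" "V3 \<union> V4"]) (use V I d13 d14 d23 d24 in auto)
  have tt: "(t + t - card {h2}) + (t + t - card {h4}) - card {h1, h3} = 4 * t - 4"
    using d by simp
  have e: "E1 \<union> E2 \<union> E3 \<union> E4 = (E1 \<union> E2) \<union> (E3 \<union> E4)" by blast
  show ?thesis unfolding e tt[symmetric]
  proof (rule Good_restrict[OF G])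
    show "{h1, h3} \<subseteq> {h1, h2} \<union> {h2, h3} \<union> ({h3, h4} \<union> {h4, h1})" by blast
  next
    fix S assume S: "S \<subseteq> {h1, h3}"
    have dd: "h1 \<noteq> h2" "h1 \<noteq> h3" "h1 \<noteq> h4" "h2 \<noteq> h3" "h2 \<noteq> h4" "h3 \<noteq> h4"
       "h2 \<noteq> h1" "h3 \<noteq> h1" "h4 \<noteq> h1" "h3 \<noteq> h2" "h4 \<noteq> h2" "h4 \<noteq> h3" using d by auto
    from S have "S = {} \<or> S = {h1} \<or> S = {h3} \<or> S = {h1, h3}" by blast
    then show "(\<Sum>A\<in>Pow ({h1, h3} - S).
        (\<lambda>S. \<Sum>A\<in>Pow ({h2} - S). tri p q r (card (S \<inter> {h1, h2} \<union> ({h2} - S - A))) * tri p q r (card (S \<inter> {h2, h3} \<union> A)))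
          (S \<inter> ({h1, h2} \<union> {h2, h3}) \<union> ({h1, h3} - S - A)) *
        (\<lambda>S. \<Sum>A\<in>Pow ({h4} - S). tri p q r (card (S \<inter> {h3, h4} \<union> ({h4} - S - A))) * tri p q r (card (S \<inter> {h4, h1} \<union> A)))
          (S \<inter> ({h3, h4} \<union> {h4, h1}) \<union> A)) =
      tri (4 * p^2 * q^2) (4 * p^2 * q * r + 4 * p * q^3) (2 * p^2 * r^2 + 2 * q^4 + 12 * p * q^2 * r) (card S)"
    proof (elim disjE)
      assume "S = {}"
      then show ?thesis using dd
        by (simp add: sum_Pow1 sum_Pow2 insert_Diff_if Int_insert_left Int_insert_right insert_commute tri_def
           power2_eq_square power3_eq_cube power4_eq_xxxx algebra_simps)
    next
      assume "S = {h1}"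
      then show ?thesis using dd
        by (simp add: sum_Pow1 sum_Pow2 insert_Diff_if Int_insert_left Int_insert_right insert_commute tri_def
           power2_eq_square power3_eq_cube power4_eq_xxxx algebra_simps)
    next
      assume "S = {h3}"
      then show ?thesis using dd
        by (simp add: sum_Pow1 sum_Pow2 insert_Diff_if Int_insert_left Int_insert_right insert_commute tri_def
           power2_eq_square power3_eq_cube power4_eq_xxxx algebra_simps)
    next
      assume "S = {h1, h3}"
      then show ?thesis using dd
        by (simp add: sum_Pow1 sum_Pow2 insert_Diff_if Int_insert_left Int_insert_right insert_commute tri_def
           power2_eq_square power3_eq_cube power4_eq_xxxx algebra_simps)
    qed
  qed
qed



lemma matching_card_bound:
  assumes M: "matching E M" and c: "\<forall>e\<in>E. card e = 2" and V: "\<Union>E \<subseteq> V" and f: "finite V"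
  shows "2 * card M \<le> card V"
proof -
  have ME: "M \<subseteq> E" using M unfolding matching_def by blast
  have finE: "finite e" if "e \<in> M" for e
  proof -
    have "card e = 2" using c ME that by blast
    then show ?thesis by (intro card_ge_0_finite) simp
  qed
  have "M \<subseteq> Pow V" using ME V by blast
  moreover have "finite (Pow V)" using f by simp
  ultimately have finM: "finite M" by (rule finite_subset)
  have pw: "pairwise disjnt M" using M unfolding matching_def pairwise_def disjnt_def by blast
  have "card (\<Union>M) = sum card M" by (rule card_Union_disjoint[OF pw finE])
  also have "\<dots> = sum (\<lambda>_. 2) M" using c ME by (intro sum.cong) auto
  also have "\<dots> = 2 * card M" by simp
  finally have "card (\<Union>M) = 2 * card M" .
  moreover have "\<Union>M \<subseteq> V" using ME V by blast
  then have "card (\<Union>M) \<le> card V" using f by (intro card_mono)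
  ultimately show ?thesis by simp
qed

lemma matchings_card1: "{M. matching E M \<and> card M = 1} = (\<lambda>e. {e}) ` E"
proof
  show "{M. matching E M \<and> card M = 1} \<subseteq> (\<lambda>e. {e}) ` E"
  proof
    fix M assume "M \<in> {M. matching E M \<and> card M = 1}"
    then have m: "matching E M" "card M = 1" by auto
    then obtain e where e: "M = {e}" by (auto simp: card_1_singleton_iff)
    then have "e \<in> E" using m unfolding matching_def by auto
    then show "M \<in> (\<lambda>e. {e}) ` E" using e by blast
  qed
  show "(\<lambda>e. {e}) ` E \<subseteq> {M. matching E M \<and> card M = 1}"
    unfolding matching_def by auto
qed

lemma matchings_card0: "finite E \<Longrightarrow> {M. matching E M \<and> card M = 0} = {{}}"
proof -
  assume f: "finite E"
  have "M = {}" if "matching E M" "card M = 0" for M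
  proof -
    have "M \<subseteq> E" using that unfolding matching_def by blast
    then have "finite M" using f by (rule finite_subset)
    then show ?thesis using that by simp
  qed
  moreover have "matching E {}" unfolding matching_def by simp
  ultimately show ?thesis by auto
qed

lemma C4:
  assumes d: "distinct [a, b, c, d]"
  shows "Good {{a, c}, {c, b}, {b, d}, {d, a}} {a, b} 2 (\<lambda>S. tri 1 2 2 (card S))"
proof -
  have dd: "a \<noteq> b" "a \<noteq> c" "a \<noteq> d" "b \<noteq> c" "b \<noteq> d" "c \<noteq> d"
       "b \<noteq> a" "c \<noteq> a" "d \<noteq> a" "c \<noteq> b" "d \<noteq> b" "d \<noteq> c" using d by auto
  define E where "E = {{a, c}, {c, b}, {b, d}, {d, a}}"
  have cE: "\<forall>e\<in>E. card e = 2" using dd unfolding E_def by auto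
  have finE: "finite E" unfolding E_def by simp
  have key: "(\<forall>M. matching (del_vertices E S) M \<longrightarrow> card M + card S \<le> 2) \<and>
      card {M. matching (del_vertices E S) M \<and> card M + card S = 2} = tri 1 2 2 (card S)"
    if S: "S \<subseteq> {a, b}" for S
  proof -
    from S have "S = {} \<or> S = {a} \<or> S = {b} \<or> S = {a, b}" by blast
    then show ?thesis
    proof (elim disjE)
      assume S0: "S = {}"
      have D: "del_vertices E S = E" unfolding S0 del_vertices_def by simp
      have b: "2 * card M \<le> 4" if "matching E M" for M
        using matching_card_bound[OF that cE, of "{a, b, c, d}"] dd unfolding E_def by auto
      have "{M. matching E M \<and> card M = 2} = {{{a, c}, {b, d}}, {{c, b}, {d, a}}}"
      proof
        show "{M. matching E M \<and> card M = 2} \<subseteq> {{{a, c}, {b, d}}, {{c, b}, {d, a}}}"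
        proof
          fix M assume "M \<in> {M. matching E M \<and> card M = 2}"
          then have m: "matching E M" "card M = 2" by auto
          then obtain x y where xy: "M = {x, y}" "x \<noteq> y" by (auto simp: card_2_iff)
          have xyE: "x \<in> E" "y \<in> E" "x \<inter> y = {}" using m(1) xy unfolding matching_def by auto
          have x: "x = {a,c} \<or> x = {c,b} \<or> x = {b,d} \<or> x = {d,a}" using xyE(1) unfolding E_def by simp
          have y: "y = {a,c} \<or> y = {c,b} \<or> y = {b,d} \<or> y = {d,a}" using xyE(2) unfolding E_def by simp
          have "{x, y} \<in> {{{a, c}, {b, d}}, {{c, b}, {d, a}}}"
            using x y xyE(3) xy(2) dd by (elim disjE) (simp_all add: insert_commute)
          then show "M \<in> {{{a, c}, {b, d}}, {{c, b}, {d, a}}}" using xy by simp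
        qed
        have "matching E {{a,c},{b,d}}" "card {{a,c},{b,d}} = 2"
          "matching E {{c,b},{d,a}}" "card {{c,b},{d,a}} = 2"
          unfolding E_def using dd by (auto simp: matching_def doubleton_eq_iff)
        then show "{{{a, c}, {b, d}}, {{c, b}, {d, a}}} \<subseteq> {M. matching E M \<and> card M = 2}"
          by blast
      qed
      moreover have "{{a, c}, {b, d}} \<noteq> {{c, b}, {d, a}}" using dd by (auto simp: doubleton_eq_iff)
      ultimately have "card {M. matching E M \<and> card M = 2} = 2" by simp
      then show ?thesis using b D S0 by (simp add: tri_def)
    next
      assume S1: "S = {a}"
      have D: "del_vertices E S = {{c, b}, {b, d}}" unfolding S1 del_vertices_def E_def using dd by auto
      have cD: "\<forall>e\<in>{{c, b}, {b, d}}. card e = 2" using dd by auto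
      have b0: "2 * card M \<le> 3" if "matching {{c, b}, {b, d}} M" for M
        using matching_card_bound[OF that cD, of "{b, c, d}"] dd by auto
      have b: "\<forall>M. matching {{c, b}, {b, d}} M \<longrightarrow> card M \<le> 1" using b0 by force
      have "card {M. matching {{c, b}, {b, d}} M \<and> card M = 1} = 2"
        unfolding matchings_card1 using dd by (simp add: card_image doubleton_eq_iff)
      then show ?thesis using b D S1 by (simp add: tri_def)
    next
      assume S1: "S = {b}"
      have D: "del_vertices E S = {{a, c}, {d, a}}" unfolding S1 del_vertices_def E_def using dd by auto
      have cD: "\<forall>e\<in>{{a, c}, {d, a}}. card e = 2" using dd by auto
      have b0: "2 * card M \<le> 3" if "matching {{a, c}, {d, a}} M" for M
        using matching_card_bound[OF that cD, of "{a, c, d}"] dd by auto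
      have b: "\<forall>M. matching {{a, c}, {d, a}} M \<longrightarrow> card M \<le> 1" using b0 by force
      have "card {M. matching {{a, c}, {d, a}} M \<and> card M = 1} = 2"
        unfolding matchings_card1 using dd by (simp add: card_image doubleton_eq_iff)
      then show ?thesis using b D S1 by (simp add: tri_def)
    next
      assume S2: "S = {a, b}"
      have D: "del_vertices E S = {}" unfolding S2 del_vertices_def E_def using dd by auto
      have e0: "matching ({}::'a set set) M \<Longrightarrow> M = {}" for M unfolding matching_def by auto
      have "\<forall>M. matching ({}::'a set set) M \<longrightarrow> card M = 0" using e0 by (metis card.empty)
      then show ?thesis using D S2 dd matchings_card0[of "{}::'a set set"] by (simp add: tri_def)
    qed
  qed
  have tp: "0 < tri 1 2 2 n" for n by (simp add: tri_def)
  show ?thesis unfolding Good_def using key cE finE E_def tp by auto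
qed



primrec sub :: "vtx \<Rightarrow> vtx set" where
  "sub (Hub n) = {Hub n}"
| "sub (New u v c) = insert (New u v c) (sub u \<union> sub v)"

lemma sub_refl: "w \<in> sub w" by (cases w) auto

lemma sub_size: "z \<in> sub w \<Longrightarrow> size z \<le> size w"
  by (induction w) auto

lemma sub_trans: "z \<in> sub w \<Longrightarrow> sub z \<subseteq> sub w"
  by (induction w) auto

lemma new_neq [simp]: "New x y b \<noteq> x" "New x y b \<noteq> y" "x \<noteq> New x y b" "y \<noteq> New x y b"
  by (auto dest: arg_cong[where f=size])

definition I :: "vtx \<Rightarrow> vtx \<Rightarrow> vtx set" where
  "I x y = {w. (\<exists>c. New x y c \<in> sub w) \<and> (\<forall>z\<in>sub w. z \<in> sub x \<or> z \<in> sub y \<or> (\<exists>c. New x y c \<in> sub z))}"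

definition W :: "vtx \<Rightarrow> vtx \<Rightarrow> vtx set" where
  "W x y = {x, y} \<union> I x y"

lemma New_in_I: "New x y b \<in> I x y"
  unfolding I_def using sub_refl by auto

lemma I_left: "I x (New x y b) \<subseteq> I x y"
proof
  fix w assume w: "w \<in> I x (New x y b)"
  then obtain c where c: "New x (New x y b) c \<in> sub w" unfolding I_def by blast
  have "New x y b \<in> sub (New x (New x y b) c)" by (simp add: sub_refl)
  then have "New x y b \<in> sub w" using sub_trans[OF c] by blast
  moreover have "\<forall>z\<in>sub w. z \<in> sub x \<or> z \<in> sub y \<or> (\<exists>c. New x y c \<in> sub z)"
  proof
    fix z assume z: "z \<in> sub w"
    then have "z \<in> sub x \<or> z \<in> sub (New x y b) \<or> (\<exists>c. New x (New x y b) c \<in> sub z)"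
      using w unfolding I_def by blast
    then show "z \<in> sub x \<or> z \<in> sub y \<or> (\<exists>c. New x y c \<in> sub z)"
    proof (elim disjE)
      assume "z \<in> sub (New x y b)"
      then show ?thesis using sub_refl by auto
    next
      assume "\<exists>c. New x (New x y b) c \<in> sub z"
      then obtain c where "New x (New x y b) c \<in> sub z" by blast
      then have "New x y b \<in> sub z" using sub_trans sub_refl by fastforce
      then show ?thesis by blast
    qed simp
  qed
  ultimately show "w \<in> I x y" unfolding I_def by blast
qed

lemma I_right: "I (New x y b) y \<subseteq> I x y"
proof
  fix w assume w: "w \<in> I (New x y b) y"
  then obtain c where c: "New (New x y b) y c \<in> sub w" unfolding I_def by blast
  have "New x y b \<in> sub (New (New x y b) y c)" by (simp add: sub_refl)
  then have "New x y b \<in> sub w" using sub_trans[OF c] by blast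
  moreover have "\<forall>z\<in>sub w. z \<in> sub x \<or> z \<in> sub y \<or> (\<exists>c. New x y c \<in> sub z)"
  proof
    fix z assume z: "z \<in> sub w"
    then have "z \<in> sub (New x y b) \<or> z \<in> sub y \<or> (\<exists>c. New (New x y b) y c \<in> sub z)"
      using w unfolding I_def by blast
    then show "z \<in> sub x \<or> z \<in> sub y \<or> (\<exists>c. New x y c \<in> sub z)"
    proof (elim disjE)
      assume "z \<in> sub (New x y b)"
      then show ?thesis using sub_refl by auto
    next
      assume "\<exists>c. New (New x y b) y c \<in> sub z"
      then obtain c where "New (New x y b) y c \<in> sub z" by blast
      then have "New x y b \<in> sub z" using sub_trans sub_refl by fastforce
      then show ?thesis by blast
    qed simp
  qed
  ultimately show "w \<in> I x y" unfolding I_def by blast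
qed

lemma W_left: "W x (New x y b) \<subseteq> W x y"
  unfolding W_def using I_left New_in_I by blast

lemma W_right: "W (New x y b) y \<subseteq> W x y"
  unfolding W_def using I_right New_in_I by blast

lemma I_disj:
  assumes "\<And>c. New x y c \<notin> sub x'" "\<And>c. New x y c \<notin> sub y'"
    "\<And>c c'. New x' y' c' \<notin> sub (New x y c)"
  shows "I x y \<inter> I x' y' = {}"
proof (rule ccontr)
  assume "I x y \<inter> I x' y' \<noteq> {}"
  then obtain w where w: "w \<in> I x y" "w \<in> I x' y'" by blast
  then obtain c where c: "New x y c \<in> sub w" unfolding I_def by blast
  then have "New x y c \<in> sub x' \<or> New x y c \<in> sub y' \<or> (\<exists>c'. New x' y' c' \<in> sub (New x y c))"
    using w(2) unfolding I_def by blast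
  then show False using assms by blast
qed

lemma notin_I: "(\<And>c. New x y c \<notin> sub w) \<Longrightarrow> w \<notin> I x y"
  unfolding I_def by blast

lemma W_int:
  assumes "I x y \<inter> I x' y' = {}" "x \<notin> I x' y'" "y \<notin> I x' y'" "x' \<notin> I x y" "y' \<notin> I x y"
  shows "W x y \<inter> W x' y' = {x, y} \<inter> {x', y'}"
  using assms unfolding W_def by blast

fun Arcs :: "nat \<Rightarrow> vtx \<Rightarrow> vtx \<Rightarrow> (vtx \<times> vtx) set" where
  "Arcs 0 x y = {(x, y)}"
| "Arcs (Suc k) x y = Arcs k x (New x y False) \<union> Arcs k (New x y False) y \<union>
     Arcs k x (New x y True) \<union> Arcs k (New x y True) y"

definition edges_of :: "(vtx \<times> vtx) set \<Rightarrow> vtx set set" where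
  "edges_of R = {{u, v} | u v. (u, v) \<in> R}"

lemma edges_of_Un: "edges_of (A \<union> B) = edges_of A \<union> edges_of B"
  unfolding edges_of_def by blast

definition SubA :: "(vtx \<times> vtx) set \<Rightarrow> (vtx \<times> vtx) set" where
  "SubA R = (\<Union>(u, v)\<in>R. \<Union>b\<in>{False, True}. {(u, New u v b), (New u v b, v)})"

lemma SubA_Un: "SubA (A \<union> B) = SubA A \<union> SubA B"
  unfolding SubA_def by blast

lemma SubA_Arcs: "SubA (Arcs k x y) = Arcs (Suc k) x y"
proof (induction k arbitrary: x y)
  case 0
  then show ?case unfolding SubA_def by auto
next
  case (Suc k)
  show ?case by (simp only: Arcs.simps(2) SubA_Un Suc.IH)
qed

lemma F_arcs_Arcs:
  "F_arcs (Suc g) = Arcs g (Hub 1) (Hub 3) \<union> Arcs g (Hub 3) (Hub 2) \<union> Arcs g (Hub 2) (Hub 4) \<union> Arcs g (Hub 4) (Hub 1)"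
proof (induction g)
  case 0
  then show ?case by auto
next
  case (Suc g)
  have "F_arcs (Suc (Suc g)) = SubA (F_arcs (Suc g))" by (simp add: SubA_def)
  then show ?case by (simp only: Suc SubA_Un SubA_Arcs)
qed

lemma Arcs_ne: "(u, v) \<in> Arcs k x y \<Longrightarrow> x \<noteq> y \<Longrightarrow> u \<noteq> v"
proof (induction k arbitrary: x y)
  case 0
  then show ?case by auto
next
  case (Suc k)
  have n: "x \<noteq> New x y False" "New x y False \<noteq> y" "x \<noteq> New x y True" "New x y True \<noteq> y" by simp_all
  from Suc.prems(1) consider "(u, v) \<in> Arcs k x (New x y False)" | "(u, v) \<in> Arcs k (New x y False) y"
    | "(u, v) \<in> Arcs k x (New x y True)" | "(u, v) \<in> Arcs k (New x y True) y" by auto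
  then show ?case
  proof cases
    case 1 then show ?thesis using Suc.IH n(1) by blast
  next
    case 2 then show ?thesis using Suc.IH n(2) by blast
  next
    case 3 then show ?thesis using Suc.IH n(3) by blast
  next
    case 4 then show ?thesis using Suc.IH n(4) by blast
  qed
qed

lemma Arcs_W: "(u, v) \<in> Arcs k x y \<Longrightarrow> u \<in> W x y \<and> v \<in> W x y"
proof (induction k arbitrary: x y)
  case 0
  then show ?case unfolding W_def by auto
next
  case (Suc k)
  then show ?case using Suc.IH[of x "New x y False"] Suc.IH[of "New x y False" y]
    Suc.IH[of x "New x y True"] Suc.IH[of "New x y True" y]
    W_left[of x y False] W_right[of x y False] W_left[of x y True] W_right[of x y True] by auto
qed

lemma Arcs_finite: "finite (Arcs k x y)"
  by (induction k arbitrary: x y) auto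

definition Ed :: "nat \<Rightarrow> vtx \<Rightarrow> vtx \<Rightarrow> vtx set set" where
  "Ed k x y = edges_of (Arcs k x y)"

lemma Ed_Suc: "Ed (Suc k) x y = Ed k x (New x y False) \<union> Ed k (New x y False) y \<union>
     Ed k x (New x y True) \<union> Ed k (New x y True) y"
  unfolding Ed_def by (simp add: edges_of_Un)

lemma Ed_W: "\<Union>(Ed k x y) \<subseteq> W x y"
  unfolding Ed_def edges_of_def using Arcs_W by blast

lemma W_ends: "{x, y} \<subseteq> W x y" unfolding W_def by blast



fun step :: "nat \<times> nat \<times> nat \<Rightarrow> nat \<times> nat \<times> nat" where
  "step (p, q, r) = (4 * p^2 * q^2, 4 * p^2 * q * r + 4 * p * q^3, 2 * p^2 * r^2 + 2 * q^4 + 12 * p * q^2 * r)"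

fun sq :: "nat \<Rightarrow> nat \<times> nat \<times> nat" where
  "sq 0 = (1, 2, 2)"
| "sq (Suc k) = step (sq k)"

definition P :: "nat \<Rightarrow> nat" where "P k = fst (sq k)"
definition Q :: "nat \<Rightarrow> nat" where "Q k = fst (snd (sq k))"
definition R :: "nat \<Rightarrow> nat" where "R k = snd (snd (sq k))"

lemma sq_eq: "sq k = (P k, Q k, R k)" unfolding P_def Q_def R_def by simp

lemma PQR_0: "P 0 = 1" "Q 0 = 2" "R 0 = 2" unfolding P_def Q_def R_def by simp_all

lemma PQR_Suc:
  "P (Suc k) = 4 * P k^2 * Q k^2"
  "Q (Suc k) = 4 * P k^2 * Q k * R k + 4 * P k * Q k^3"
  "R (Suc k) = 2 * P k^2 * R k^2 + 2 * Q k^4 + 12 * P k * Q k^2 * R k"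
  by (simp_all add: P_def[of "Suc k"] Q_def[of "Suc k"] R_def[of "Suc k"] sq_eq[of k])

primrec tt :: "nat \<Rightarrow> nat" where
  "tt 0 = 2"
| "tt (Suc k) = 4 * tt k - 4"

lemma Ed_card2: "x \<noteq> y \<Longrightarrow> \<forall>e\<in>Ed k x y. card e = 2"
  unfolding Ed_def edges_of_def using Arcs_ne by fastforce

lemma size_notin_sub: "z \<in> sub w \<Longrightarrow> size w < size z \<Longrightarrow> False"
  using sub_size by fastforce

lemma Good_Ed: "x \<noteq> y \<Longrightarrow> Good (Ed (Suc k) x y) {x, y} (tt k) (\<lambda>S. tri (P k) (Q k) (R k) (card S))"
proof (induction k arbitrary: x y)
  case 0
  define n0 where "n0 = New x y False"
  define n1 where "n1 = New x y True"
  have d: "distinct [x, y, n0, n1]" using 0 unfolding n0_def n1_def by simp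
  have "Ed (Suc 0) x y = {{x, n0}, {n0, y}, {y, n1}, {n1, x}}"
    unfolding Ed_def edges_of_def n0_def n1_def by (auto simp: insert_commute)
  then show ?case using C4[OF d] by (simp add: PQR_0)
next
  case (Suc k)
  define n0 where "n0 = New x y False"
  define n1 where "n1 = New x y True"
  have d: "distinct [x, n0, y, n1]" using Suc.prems unfolding n0_def n1_def by simp
  have G1: "Good (Ed (Suc k) x n0) {x, n0} (tt k) (\<lambda>S. tri (P k) (Q k) (R k) (card S))"
    using Suc.IH d by simp
  have G2: "Good (Ed (Suc k) n0 y) {n0, y} (tt k) (\<lambda>S. tri (P k) (Q k) (R k) (card S))"
    using Suc.IH d by simp
  have G3: "Good (Ed (Suc k) n1 y) {y, n1} (tt k) (\<lambda>S. tri (P k) (Q k) (R k) (card S))"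
  proof -
    have "n1 \<noteq> y" using d by auto
    then have "Good (Ed (Suc k) n1 y) {n1, y} (tt k) (\<lambda>S. tri (P k) (Q k) (R k) (card S))" by (rule Suc.IH)
    then show ?thesis by (simp add: insert_commute)
  qed
  have G4: "Good (Ed (Suc k) x n1) {n1, x} (tt k) (\<lambda>S. tri (P k) (Q k) (R k) (card S))"
    using Suc.IH[of x n1] d by (simp add: insert_commute)
  have V: "{x, n0} \<subseteq> W x n0" "{n0, y} \<subseteq> W n0 y" "{y, n1} \<subseteq> W n1 y" "{n1, x} \<subseteq> W x n1"
    unfolding W_def by auto
  have i1: "W x n0 \<inter> W n0 y = {x, n0} \<inter> {n0, y}" unfolding n0_def
    by (intro W_int I_disj notin_I) (auto dest: size_notin_sub)
  have i2: "W n0 y \<inter> W n1 y = {n0, y} \<inter> {n1, y}" unfolding n0_def n1_def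
    by (intro W_int I_disj notin_I) (auto dest: size_notin_sub)
  have i3: "W n1 y \<inter> W x n1 = {n1, y} \<inter> {x, n1}" unfolding n1_def
    by (intro W_int I_disj notin_I) (auto dest: size_notin_sub)
  have i4: "W x n1 \<inter> W x n0 = {x, n1} \<inter> {x, n0}" unfolding n0_def n1_def
    by (intro W_int I_disj notin_I) (auto dest: size_notin_sub)
  have i5: "W x n0 \<inter> W n1 y = {x, n0} \<inter> {n1, y}" unfolding n0_def n1_def
    by (intro W_int I_disj notin_I) (auto dest: size_notin_sub)
  have i6: "W n0 y \<inter> W x n1 = {n0, y} \<inter> {x, n1}" unfolding n0_def n1_def
    by (intro W_int I_disj notin_I) (auto dest: size_notin_sub)
  have I: "W x n0 \<inter> W n0 y = {n0}" "W n0 y \<inter> W n1 y = {y}" "W n1 y \<inter> W x n1 = {n1}"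
     "W x n1 \<inter> W x n0 = {x}" "W x n0 \<inter> W n1 y = {}" "W n0 y \<inter> W x n1 = {}"
    using i1 i2 i3 i4 i5 i6 d by auto
  have C: "Good (Ed (Suc k) x n0 \<union> Ed (Suc k) n0 y \<union> Ed (Suc k) n1 y \<union> Ed (Suc k) x n1) {x, y} (4 * tt k - 4)
     (\<lambda>S. tri (4 * P k^2 * Q k^2) (4 * P k^2 * Q k * R k + 4 * P k * Q k^3)
              (2 * P k^2 * R k^2 + 2 * Q k^4 + 12 * P k * Q k^2 * R k) (card S))"
    by (rule cycle[OF d G1 G2 G3 G4 Ed_W V(1) Ed_W V(2) Ed_W V(3) Ed_W V(4) I])
  have "Ed (Suc (Suc k)) x y = Ed (Suc k) x n0 \<union> Ed (Suc k) n0 y \<union> Ed (Suc k) n1 y \<union> Ed (Suc k) x n1"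
    unfolding Ed_Suc[of "Suc k"] n0_def n1_def by blast
  then show ?case using C by (simp add: PQR_Suc)
qed

lemma Good_F: "Good (F_edges (Suc g)) {Hub 1, Hub 2} (tt g) (\<lambda>S. tri (P g) (Q g) (R g) (card S))"
proof (cases g)
  case 0
  have d: "distinct [Hub 1, Hub 2, Hub 3, Hub 4]" by simp
  have "F_edges (Suc 0) = {{Hub 1, Hub 3}, {Hub 3, Hub 2}, {Hub 2, Hub 4}, {Hub 4, Hub 1}}"
    unfolding F_edges_def by auto
  then show ?thesis using C4[OF d] 0 by (simp add: PQR_0)
next
  case (Suc k)
  have d: "distinct [Hub 1, Hub 3, Hub 2, Hub 4]" by simp
  have E: "F_edges (Suc (Suc k)) = Ed (Suc k) (Hub 1) (Hub 3) \<union> Ed (Suc k) (Hub 3) (Hub 2) \<union>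
      Ed (Suc k) (Hub 2) (Hub 4) \<union> Ed (Suc k) (Hub 4) (Hub 1)"
    unfolding F_edges_def Ed_def F_arcs_Arcs[of "Suc k"] edges_of_def by blast
  have G: "Good (Ed (Suc k) a b) {a, b} (tt k) (\<lambda>S. tri (P k) (Q k) (R k) (card S))" if "a \<noteq> b" for a b
    using Good_Ed[OF that] .
  have i: "W (Hub 1) (Hub 3) \<inter> W (Hub 3) (Hub 2) = {Hub 3}"
     "W (Hub 3) (Hub 2) \<inter> W (Hub 2) (Hub 4) = {Hub 2}"
     "W (Hub 2) (Hub 4) \<inter> W (Hub 4) (Hub 1) = {Hub 4}"
     "W (Hub 4) (Hub 1) \<inter> W (Hub 1) (Hub 3) = {Hub 1}"
     "W (Hub 1) (Hub 3) \<inter> W (Hub 2) (Hub 4) = {}"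
     "W (Hub 3) (Hub 2) \<inter> W (Hub 4) (Hub 1) = {}"
    by (subst W_int; (intro I_disj notin_I)?; auto)+
  have C: "Good (F_edges (Suc (Suc k))) {Hub 1, Hub 2} (4 * tt k - 4)
     (\<lambda>S. tri (4 * P k^2 * Q k^2) (4 * P k^2 * Q k * R k + 4 * P k * Q k^3)
              (2 * P k^2 * R k^2 + 2 * Q k^4 + 12 * P k * Q k^2 * R k) (card S))"
    unfolding E
    by (rule cycle[OF d G G G G Ed_W W_ends Ed_W W_ends Ed_W W_ends Ed_W W_ends i]) simp_all
  then show ?thesis using Suc by (simp add: PQR_Suc)
qed

lemma Good_count:
  assumes G: "Good E T t N" and S: "S \<subseteq> T"
  shows "num_max_matchings (del_vertices E S) = N S"
proof -
  have b: "\<And>M. matching (del_vertices E S) M \<Longrightarrow> card M + card S \<le> t"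
    and c: "card {M. matching (del_vertices E S) M \<and> card M + card S = t} = N S"
    and p: "0 < N S"
    using G S unfolding Good_def by blast+
  from c p obtain M0 where M0: "matching (del_vertices E S) M0" "card M0 + card S = t"
    by (metis (mono_tags, lifting) card.empty empty_Collect_eq less_irrefl)
  have "{M. max_matching (del_vertices E S) M} = {M. matching (del_vertices E S) M \<and> card M + card S = t}"
  proof (intro Collect_cong iffI)
    fix M assume "max_matching (del_vertices E S) M"
    then have "matching (del_vertices E S) M" "card M0 \<le> card M" using M0 unfolding max_matching_def by auto
    then show "matching (del_vertices E S) M \<and> card M + card S = t" using b M0 by force
  next
    fix M assume "matching (del_vertices E S) M \<and> card M + card S = t"
    then show "max_matching (del_vertices E S) M" unfolding max_matching_def using b by force
  qed
  then show ?thesis unfolding num_max_matchings_def using c by simp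
qed

lemma vals: "phi (Suc g) = P g" "varphi (Suc g) = Q g" "theta (Suc g) = R g"
proof -
  have G: "Good (F_edges (Suc g)) {Hub 1, Hub 2} (tt g) (\<lambda>S. tri (P g) (Q g) (R g) (card S))" by (rule Good_F)
  show "phi (Suc g) = P g" unfolding phi_def using Good_count[OF G, of "{Hub 1, Hub 2}"] by (simp add: tri_def)
  show "varphi (Suc g) = Q g" unfolding varphi_def using Good_count[OF G, of "{Hub 1}"] by (simp add: tri_def)
  have "del_vertices (F_edges (Suc g)) {} = F_edges (Suc g)" unfolding del_vertices_def by simp
  then show "theta (Suc g) = R g" unfolding theta_def using Good_count[OF G, of "{}"] by (simp add: tri_def)
qed

theorem theorem2:
  shows "phi 1 = 1 \<and> varphi 1 = 2 \<and> theta 1 = 2 \<and>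
    (\<forall>g\<ge>1.
       phi (g + 1) = 4 * phi g ^ 2 * varphi g ^ 2 \<and>
       varphi (g + 1) = 4 * phi g ^ 2 * varphi g * theta g + 4 * phi g * varphi g ^ 3 \<and>
       theta (g + 1) = 2 * phi g ^ 2 * theta g ^ 2 + 2 * varphi g ^ 4
                        + 12 * phi g * varphi g ^ 2 * theta g)"
proof -
  have base: "phi 1 = 1 \<and> varphi 1 = 2 \<and> theta 1 = 2"
    using vals[of 0] by (simp add: PQR_0)
  have rec: "phi (g + 1) = 4 * phi g ^ 2 * varphi g ^ 2 \<and>
       varphi (g + 1) = 4 * phi g ^ 2 * varphi g * theta g + 4 * phi g * varphi g ^ 3 \<and>
       theta (g + 1) = 2 * phi g ^ 2 * theta g ^ 2 + 2 * varphi g ^ 4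
                        + 12 * phi g * varphi g ^ 2 * theta g" if g: "g \<ge> 1" for g
  proof -
    obtain k where k: "g = Suc k" using g by (cases g) auto
    show ?thesis unfolding k using vals[of k] vals[of "Suc k"] by (simp add: PQR_Suc)
  qed
  show ?thesis using base rec by blast
qed


end
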